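(* Let $(X,d)$ be a complete metric space with $|X|\geqslant 3$ and let $T\colon X\to X$ be continuous and asymptotically regular, and suppose there exist $\alpha\in[0,\frac12)$ and $\lambda\in[0,\infty)$ such that $$d(Tx,Ty)+d(Ty,Tz)+d(Tx,Tz)\leqslant \alpha\big(d(x,y)+d(y,z)+d(z,x)\big)+\lambda\big(d(x,Tx)+d(y,Ty)+d(z,Tz)\big)$$ for all pairwise distinct $x,y,z\in X$. Then $T$ has a fixed point, and $T$ has at most two fixed points.
   Context: A mapping $T\colon X\to X$ on a metric space is asymptotically regular if $\lim_{n\to\infty}d(T^{n+1}x,T^nx)=0$ for every $x\in X$. *)

theory Defs
  imports "HOL-Analysis.Analysis"
begin

definition asymptotically_regular :: "('a::metric_space \<Rightarrow> 'a) \<Rightarrow> bool" where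
  "asymptotically_regular T \<longleftrightarrow>
     (\<forall>x. (\<lambda>n. dist ((T ^^ Suc n) x) ((T ^^ n) x)) \<longlonglongrightarrow> 0)"

end

theory Submission
  imports Defs
begin

lemma no_three_card:
  assumes "\<And>x y z. x \<in> S \<Longrightarrow> y \<in> S \<Longrightarrow> z \<in> S \<Longrightarrow> x \<noteq> y \<Longrightarrow> y \<noteq> z \<Longrightarrow> x \<noteq> z \<Longrightarrow> False"
  shows "finite S \<and> card S \<le> 2"
proof (rule ccontr)
  assume "\<not> (finite S \<and> card S \<le> 2)"
  then have "\<exists>B. finite B \<and> card B = 3 \<and> B \<subseteq> S"
  proof (cases "finite S")
    case True
    then have "3 \<le> card S" using \<open>\<not> (finite S \<and> card S \<le> 2)\<close> by auto
    then show ?thesis by (metis obtain_subset_with_card_n)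
  next
    case False
    then show ?thesis using infinite_arbitrarily_large by blast
  qed
  then obtain B where "card B = 3" "B \<subseteq> S" by blast
  then show False using assms by (auto simp: card_3_iff)
qed

theorem corollary4p8:
  fixes T :: "'a::complete_space \<Rightarrow> 'a" and alpha lam :: real
  assumes card3: "infinite (UNIV :: 'a set) \<or> card (UNIV :: 'a set) \<ge> 3"
    and cont: "continuous_on UNIV T"
    and asreg: "asymptotically_regular T"
    and halpha: "0 \<le> alpha" "alpha < 1/2"
    and hlam: "0 \<le> lam"
    and ineq: "\<And>x y z. x \<noteq> y \<Longrightarrow> y \<noteq> z \<Longrightarrow> x \<noteq> z \<Longrightarrow>
      dist (T x) (T y) + dist (T y) (T z) + dist (T x) (T z)
        \<le> alpha * (dist x y + dist y z + dist z x)
          + lam * (dist x (T x) + dist y (T y) + dist z (T z))"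
  shows "(\<exists>x. T x = x) \<and> finite {x. T x = x} \<and> card {x. T x = x} \<le> 2"
proof -
  have part2: "finite {x. T x = x} \<and> card {x. T x = x} \<le> 2"
  proof (rule no_three_card)
    fix x y z assume fx: "x \<in> {x. T x = x}" "y \<in> {x. T x = x}" "z \<in> {x. T x = x}"
      and d: "x \<noteq> y" "y \<noteq> z" "x \<noteq> z"
    have "dist x y + dist y z + dist x z \<le> alpha * (dist x y + dist y z + dist z x)"
      using ineq[OF d] fx by simp
    moreover have "dist x y > 0" using d by simp
    moreover have "dist y z \<ge> 0" "dist x z \<ge> 0" by auto
    ultimately show False using halpha by (simp add: dist_commute)
  qed
  define x0 :: 'a where "x0 = undefined"
  define x where "x k = (T ^^ k) x0" for k
  have xS: "x (Suc k) = T (x k)" for k by (simp add: x_def)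
  have xadd: "x (k + i) = (T ^^ i) (x k)" for k i
    by (simp add: x_def funpow_add add.commute)
  define e where "e k = dist (x (Suc k)) (x k)" for k
  have e0: "e \<longlonglongrightarrow> 0" using asreg unfolding asymptotically_regular_def e_def x_def by blast
  have ege: "e k \<ge> 0" for k by (simp add: e_def)
  have "\<exists>p. T p = p"
  proof (cases "inj x")
    case False
    then obtain n m where nm: "n < m" "x n = x m"
      by (metis injI linorder_neqE_nat)
    define q where "q = m - n"
    have q0: "q > 0" using nm by (simp add: q_def)
    have xq: "x (n + q) = x n" using nm by (simp add: q_def)
    have per: "x (n + j * q) = x n" for j
    proof (induction j)
      case 0 then show ?case by simp
    next
      case (Suc j)
      have "x (n + Suc j * q) = x ((n + j * q) + q)" by (simp add: algebra_simps)
      also have "\<dots> = (T ^^ q) (x (n + j*q))" by (rule xadd)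
      also have "\<dots> = (T ^^ q) (x n)" using Suc by simp
      also have "\<dots> = x (n + q)" by (simp add: xadd)
      also have "\<dots> = x n" by (rule xq)
      finally show ?case .
    qed
    have ej: "e (n + j * q) = e n" for j
      unfolding e_def using per[of j] by (simp add: xS)
    have sm: "strict_mono (\<lambda>j. n + j * q)" using q0 by (simp add: strict_mono_def)
    have "(\<lambda>j. e (n + j * q)) \<longlonglongrightarrow> 0"
      using LIMSEQ_subseq_LIMSEQ[OF e0 sm] by (simp add: o_def)
    then have "(\<lambda>j. e n) \<longlonglongrightarrow> 0" using ej by simp
    then have "e n = 0" using LIMSEQ_const_iff by blast
    then show ?thesis unfolding e_def by (auto simp: xS)
  next
    case True
    define K where "K = 3 + lam"
    have K0: "K > 0" using hlam by (simp add: K_def)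
    have key: "dist (x n) (x m) \<le> K * (e n + e (Suc n) + e m)" if "Suc (Suc n) \<le> m" for n m
    proof -
      have d: "x n \<noteq> x (Suc n)" "x (Suc n) \<noteq> x m" "x n \<noteq> x m"
        using True that by (auto dest: injD)
      have I: "dist (x (Suc n)) (x (Suc (Suc n))) + dist (x (Suc (Suc n))) (x (Suc m)) + dist (x (Suc n)) (x (Suc m))
        \<le> alpha * (dist (x n) (x (Suc n)) + dist (x (Suc n)) (x m) + dist (x m) (x n))
          + lam * (dist (x n) (x (Suc n)) + dist (x (Suc n)) (x (Suc (Suc n))) + dist (x m) (x (Suc m)))"
        using ineq[OF d] by (simp add: xS)
      define D where "D = dist (x n) (x m)"
      define a where "a = e n"
      define b where "b = e (Suc n)"
      define c where "c = e m"
      have a: "dist (x n) (x (Suc n)) = a" by (simp add: a_def e_def dist_commute)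
      have b: "dist (x (Suc n)) (x (Suc (Suc n))) = b" by (simp add: b_def e_def dist_commute)
      have c: "dist (x m) (x (Suc m)) = c" by (simp add: c_def e_def dist_commute)
      have t1: "dist (x (Suc (Suc n))) (x (Suc m)) \<ge> D - a - b - c"
        using dist_triangle[of "x n" "x m" "x (Suc n)"] dist_triangle[of "x (Suc n)" "x m" "x (Suc (Suc n))"]
          dist_triangle[of "x (Suc (Suc n))" "x m" "x (Suc m)"] a b c
        unfolding D_def by (simp add: dist_commute)
      have t2: "dist (x (Suc n)) (x (Suc m)) \<ge> D - a - c"
        using dist_triangle[of "x n" "x m" "x (Suc n)"]
          dist_triangle[of "x (Suc n)" "x m" "x (Suc m)"] a b c
        unfolding D_def by (simp add: dist_commute)
      have t3: "dist (x (Suc n)) (x m) \<le> a + D"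
        using dist_triangle[of "x (Suc n)" "x m" "x n"] a unfolding D_def by (simp add: dist_commute)
      have I2: "b + (D - a - b - c) + (D - a - c) \<le> alpha * (a + (a + D) + D) + lam * (a + b + c)"
      proof -
        have "alpha * (a + dist (x (Suc n)) (x m) + D) \<le> alpha * (a + (a + D) + D)"
          using t3 halpha by (intro mult_left_mono) auto
        then show ?thesis using I t1 t2 a b c by (simp add: D_def dist_commute)
      qed
      have ab: "a \<ge> 0" "b \<ge> 0" "c \<ge> 0" "D \<ge> 0" by (auto simp: a_def b_def c_def D_def ege)
      have "alpha * (2*a + 2*D) \<le> (1/2) * (2*a+2*D)"
        using halpha ab by (intro mult_right_mono) auto
      then have "D \<le> (3 + lam) * (a + b + c) - lam * (a+b+c) + lam * (a+b+c)"
        using I2 ab by (simp add: algebra_simps)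
      also have "\<dots> = K * (a+b+c)" by (simp add: K_def)
      finally show ?thesis by (simp add: D_def a_def b_def c_def)
    qed
    have "Cauchy x"
    proof (rule metric_CauchyI)
      fix eps :: real assume "eps > 0"
      then have "eps / (3*K) > 0" using K0 by simp
      then obtain N where N: "\<And>k. k \<ge> N \<Longrightarrow> norm (e k - 0) < eps / (3*K)"
        using LIMSEQ_D[OF e0] by blast
      have eN: "e k < eps / (3*K)" if "k \<ge> N" for k using N[OF that] by simp
      have main: "dist (x n) (x m) < eps" if "N \<le> n" "n \<le> m" for n m
      proof (cases "Suc (Suc n) \<le> m")
        case True
        have "dist (x n) (x m) \<le> K * (e n + e (Suc n) + e m)" using key[OF True] .
        also have "\<dots> < K * (3 * (eps / (3*K)))"
          using eN[of n] eN[of "Suc n"] eN[of m] that True K0 by (intro mult_strict_left_mono) auto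
        also have "\<dots> = eps" using K0 by simp
        finally show ?thesis .
      next
        case False
        then have "m = n \<or> m = Suc n" using that by auto
        then show ?thesis
        proof
          assume "m = n" then show ?thesis using \<open>eps > 0\<close> by simp
        next
          assume "m = Suc n"
          then have "dist (x n) (x m) = e n" by (simp add: e_def dist_commute)
          moreover have "e n < eps"
          proof -
            have "eps / (3*K) \<le> eps / 1" using \<open>eps > 0\<close> K0 hlam
              by (intro divide_left_mono) (auto simp: K_def)
            then show ?thesis using eN[of n] that by simp
          qed
          ultimately show ?thesis by simp
        qed
      qed
      show "\<exists>M. \<forall>m\<ge>M. \<forall>n\<ge>M. dist (x m) (x n) < eps"
      proof (intro exI allI impI)
        fix m n assume "N \<le> m" "N \<le> n"
        then show "dist (x m) (x n) < eps"
          using main[of m n] main[of n m] by (cases "m \<le> n") (auto simp: dist_commute)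
      qed
    qed
    then obtain p where p: "x \<longlonglongrightarrow> p" using Cauchy_convergent convergent_def by blast
    have "(\<lambda>k. x (Suc k)) \<longlonglongrightarrow> p" using p by (rule LIMSEQ_Suc)
    moreover have "(\<lambda>k. T (x k)) \<longlonglongrightarrow> T p"
      proof (rule isCont_tendsto_compose[OF _ p])
      show "isCont T p" using cont by (simp add: continuous_on_eq_continuous_at)
    qed
    ultimately have "T p = p" using LIMSEQ_unique by (simp add: xS) 
    then show ?thesis by blast
  qed
  then show ?thesis using part2 by blast
qed

end
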